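(* There is an absolute constant $c>0$ and a polynomial $q$ such that the following holds. Let $\mathbf T:\{0,1\}^n\to\{0,1\}$ be a size-$s$ stochastic decision tree, $\varepsilon\in(0,1/2)$, $\delta\in(0,1)$, let $S=s^{c/\varepsilon^2}$ and $D=\lceil\log_2(S/\varepsilon)\rceil$. If $m\ge q(n^{D},1/\varepsilon,\log(1/\delta))$ and $X$ is a multiset of $m$ i.i.d. labeled examples $(\mathbf x,\mathbf T(\mathbf x))$ with $\mathbf x$ uniform on $\{0,1\}^n$, then with probability at least $1-\delta$ over the draw of $X$, the tree $T^\star=\textsc{Find}(X,D)$ satisfies $\Pr_{\mathbf x,\mathbf T}[T^\star(\mathbf x)\neq\mathbf T(\mathbf x)]\le\mathrm{opt}_{\mathbf T}+3\varepsilon$.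
   Context: A stochastic decision tree (DT) $\mathbf{T}$ over $\{0,1\}^n$ is a rooted binary tree whose internal nodes are either deterministic nodes, each labeled by a variable $x_i$ ($i\in[n]$) with one outgoing edge followed when $x_i=0$ and one when $x_i=1$, or stochastic nodes, each with two outgoing edges followed with probabilities $p$ and $1-p$ (for a node-specific $p\in[0,1]$, using fresh independent randomness at each node), and whose leaves are labeled $0$ or $1$. On input $x$, $\mathbf{T}(x)$ is the (random) label of the leaf reached. The size of a DT is its number of leaves. $\mu_{\mathbf T}(x)=\Pr[\mathbf T(x)=1]$, $\mathrm{round}(t)=\mathbb 1[t\ge1/2]$, and $\mathrm{opt}_{\mathbf T}=\mathbb E_{\mathbf x}\Pr_{\mathbf T}[\mathbf T(\mathbf x)\ne\mathrm{round}(\mu_{\mathbf T}(\mathbf x))]$. For a multiset $X$ of labeled examples, $(\mathbf x,\mathbf y)\sim X$ denotes a uniform element and $X_{x_i=b}$ the sub-multiset with $x_i=b$. $\textsc{Find}(X,d)$ is defined recursively: (1) if $d=0$, return the constant $c\in\{0,1\}$ minimizing $\Pr_{(\mathbf x,\mathbf y)\sim X}[c\neq\mathbf y]$; (2) otherwise, for each $i\in[n]$ let $T_i$ query $x_i$ at the root with subtrees $\textsc{Find}(X_{x_i=0},d-1)$ (for $x_i=0$) and $\textsc{Find}(X_{x_i=1},d-1)$ (for $x_i=1$); (3) return the $T_i$ minimizing $\Pr_{(\mathbf x,\mathbf y)\sim X}[T_i(\mathbf x)\neq\mathbf y]$. *)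

theory Defs
  imports "HOL-Probability.Probability"
begin

text \<open>SQuery i t0 t1: follow t0 if x_i = 0 (False), t1 if x_i = 1 (True).
  SCoin p t1 t2: follow t1 with probability p and t2 with probability 1 - p.
  Inputs in {0,1}^n are bool lists of length n, variables indexed 0..n-1.\<close>
datatype sdt = SLeaf bool | SQuery nat sdt sdt | SCoin real sdt sdt

fun sdt_size :: "sdt \<Rightarrow> nat" where
  "sdt_size (SLeaf b) = 1"
| "sdt_size (SQuery i a b) = sdt_size a + sdt_size b"
| "sdt_size (SCoin p a b) = sdt_size a + sdt_size b"

fun sdt_wf :: "nat \<Rightarrow> sdt \<Rightarrow> bool" where
  "sdt_wf n (SLeaf b) = True"
| "sdt_wf n (SQuery i a b) = (i < n \<and> sdt_wf n a \<and> sdt_wf n b)"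
| "sdt_wf n (SCoin p a b) = (0 \<le> p \<and> p \<le> 1 \<and> sdt_wf n a \<and> sdt_wf n b)"

fun sdt_run :: "sdt \<Rightarrow> bool list \<Rightarrow> bool pmf" where
  "sdt_run (SLeaf b) x = return_pmf b"
| "sdt_run (SQuery i a b) x = (if x ! i then sdt_run b x else sdt_run a x)"
| "sdt_run (SCoin p a b) x =
     bind_pmf (bernoulli_pmf p) (\<lambda>c. if c then sdt_run a x else sdt_run b x)"

definition sdt_mu :: "sdt \<Rightarrow> bool list \<Rightarrow> real" where
  "sdt_mu T x = pmf (sdt_run T x) True"

definition round_half :: "real \<Rightarrow> bool" where
  "round_half t = (t \<ge> 1/2)"

definition cube :: "nat \<Rightarrow> bool list set" where
  "cube n = {xs. length xs = n}"

definition sdt_opt :: "nat \<Rightarrow> sdt \<Rightarrow> real" where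
  "sdt_opt n T = measure_pmf.expectation (pmf_of_set (cube n))
     (\<lambda>x. measure_pmf.prob (sdt_run T x) {y. y \<noteq> round_half (sdt_mu T x)})"

datatype dt = DLeaf bool | DQuery nat dt dt

fun dt_eval :: "dt \<Rightarrow> bool list \<Rightarrow> bool" where
  "dt_eval (DLeaf b) x = b"
| "dt_eval (DQuery i a b) x = (if x ! i then dt_eval b x else dt_eval a x)"

text \<open>Empirical error Pr_{(x,y)~X}[T x \<noteq> y]; equals 0 on the empty multiset (0/0 = 0).\<close>
definition emp_err :: "(bool list \<times> bool) multiset \<Rightarrow> dt \<Rightarrow> real" where
  "emp_err X T = real (size (filter_mset (\<lambda>(x, y). dt_eval T x \<noteq> y) X)) / real (size X)"

definition restr :: "(bool list \<times> bool) multiset \<Rightarrow> nat \<Rightarrow> bool \<Rightarrow> (bool list \<times> bool) multiset" where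
  "restr X i b = filter_mset (\<lambda>(x, y). x ! i = b) X"

text \<open>find_set n X d is the set of all possible outputs of Find(X,d) over {0,1}^n,
  i.e. over all ways of breaking ties in the argmin steps.\<close>
fun find_set :: "nat \<Rightarrow> (bool list \<times> bool) multiset \<Rightarrow> nat \<Rightarrow> dt set" where
  "find_set n X 0 = {DLeaf c | c. \<forall>c'. emp_err X (DLeaf c) \<le> emp_err X (DLeaf c')}"
| "find_set n X (Suc d) =
     (let C = {DQuery i T0 T1 | i T0 T1. i < n \<and> T0 \<in> find_set n (restr X i False) d
                                        \<and> T1 \<in> find_set n (restr X i True) d}
      in {T \<in> C. \<forall>T' \<in> C. emp_err X T \<le> emp_err X T'})"

definition example_pmf :: "nat \<Rightarrow> sdt \<Rightarrow> (bool list \<times> bool) pmf" where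
  "example_pmf n T = bind_pmf (pmf_of_set (cube n)) (\<lambda>x. map_pmf (\<lambda>y. (x, y)) (sdt_run T x))"

fun iid_pmf :: "'a pmf \<Rightarrow> nat \<Rightarrow> 'a list pmf" where
  "iid_pmf p 0 = return_pmf []"
| "iid_pmf p (Suc m) = bind_pmf p (\<lambda>a. map_pmf (Cons a) (iid_pmf p m))"

definition sample_pmf :: "nat \<Rightarrow> sdt \<Rightarrow> nat \<Rightarrow> (bool list \<times> bool) multiset pmf" where
  "sample_pmf n T m = map_pmf mset (iid_pmf (example_pmf n T) m)"

definition true_err :: "nat \<Rightarrow> sdt \<Rightarrow> dt \<Rightarrow> real" where
  "true_err n T Tstar = measure_pmf.prob (example_pmf n T) {(x, y). dt_eval Tstar x \<noteq> y}"

end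

theory Submission
  imports Defs "HOL-Library.FuncSet"
begin

lemma iid_set: "L \<in> set_pmf (iid_pmf p m) \<Longrightarrow> length L = m \<and> set L \<subseteq> set_pmf p"
  by (induction m arbitrary: L) fastforce+

lemma iid_map: "map_pmf (map f) (iid_pmf p m) = iid_pmf (map_pmf f p) m"
proof (induction m)
  case (Suc m)
  show ?case by (simp add: map_bind_pmf bind_map_pmf map_pmf_comp Suc.IH[symmetric])
qed simp

lemma iid_mgf:
  "(\<integral>\<^sup>+L. ennreal (exp (t * sum_list (map g L))) \<partial>iid_pmf p m) = (\<integral>\<^sup>+a. ennreal (exp (t * g a)) \<partial>p) ^ m"
proof (induction m)
  case 0 then show ?case by simp
next
  case (Suc m)
  have "(\<integral>\<^sup>+L. ennreal (exp (t * sum_list (map g L))) \<partial>iid_pmf p (Suc m))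
     = (\<integral>\<^sup>+a. (\<integral>\<^sup>+L. ennreal (exp (t * g a)) * ennreal (exp (t * sum_list (map g L))) \<partial>iid_pmf p m) \<partial>p)"
    by (simp add: distrib_left exp_add ennreal_mult)
  also have "\<dots> = (\<integral>\<^sup>+a. ennreal (exp (t * g a)) * (\<integral>\<^sup>+L. ennreal (exp (t * sum_list (map g L))) \<partial>iid_pmf p m) \<partial>p)"
    by (subst nn_integral_cmult) auto
  also have "\<dots> = (\<integral>\<^sup>+a. ennreal (exp (t * g a)) \<partial>p) * (\<integral>\<^sup>+a. ennreal (exp (t * g a)) \<partial>p) ^ m"
    by (subst Suc) (subst nn_integral_multc, auto)
  finally show ?case by simp
qed


lemma exp_le_quad:
  fixes u :: real assumes "\<bar>u\<bar> \<le> 1" shows "exp u \<le> 1 + u + u\<^sup>2"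
proof (cases "u \<ge> 0")
  case True then show ?thesis using exp_bound[of u] assms by simp
next
  case False
  have e: "exp (-u) \<ge> 1 - u" using exp_ge_add_one_self[of "-u"] by simp
  have "exp u = inverse (exp (-u))" by (simp add: exp_minus)
  also have "\<dots> \<le> inverse (1 - u)" using e False by (intro le_imp_inverse_le) auto
  also have "\<dots> \<le> 1 + u + u\<^sup>2"
  proof -
    have "1 \<le> (1 - u) * (1 + u + u\<^sup>2)" using False
      by (simp add: algebra_simps power2_eq_square) (metis mult_nonneg_nonneg neg_0_le_iff_le linorder_not_le less_imp_le mult_le_0_iff)
    then show ?thesis using False by (simp add: field_simps)
  qed
  finally show ?thesis .
qed

lemma pmf_integrable_bounded:
  fixes f :: "'a \<Rightarrow> real"
  assumes "\<And>a. \<bar>f a\<bar> \<le> B" shows "integrable (measure_pmf p) f"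
  by (rule measure_pmf.integrable_const_bound[where B=B]) (auto simp: assms)

lemma mgf_one:
  fixes g :: "'a \<Rightarrow> real" and p :: "'a pmf"
  assumes g: "\<And>a. 0 \<le> g a \<and> g a \<le> 1" and t: "\<bar>t\<bar> \<le> 1"
  shows "(\<integral>\<^sup>+a. ennreal (exp (t * g a)) \<partial>p) \<le> ennreal (exp (t * measure_pmf.expectation p g + t\<^sup>2))"
proof -
  define \<mu> where "\<mu> = measure_pmf.expectation p g"
  have ig: "integrable (measure_pmf p) g" using g by (intro pmf_integrable_bounded[where B=1]) auto
  have \<mu>01: "0 \<le> \<mu>" "\<mu> \<le> 1" unfolding \<mu>_def using g
    by (auto intro!: integral_nonneg_AE measure_pmf.integral_le_const AE_pmfI ig)
  have ie: "integrable (measure_pmf p) (\<lambda>a. exp (t * g a))"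
  proof (rule pmf_integrable_bounded[where B="exp 1"])
    fix a have "t * g a \<le> 1" using g[of a] t by (smt (verit) mult_left_le mult_minus_left abs_le_iff mult_le_one)
    then show "\<bar>exp (t * g a)\<bar> \<le> exp 1" by simp
  qed
  have pw: "exp (t * g a) \<le> exp (t * \<mu>) * (1 + t * (g a - \<mu>) + t\<^sup>2)" for a
  proof -
    have "\<bar>g a - \<mu>\<bar> \<le> 1" using g[of a] \<mu>01 by auto
    then have a1: "\<bar>t * (g a - \<mu>)\<bar> \<le> 1" using t by (simp add: abs_mult mult_le_one)
    have a2: "(t * (g a - \<mu>))\<^sup>2 \<le> t\<^sup>2"
    proof -
      have "(g a - \<mu>)\<^sup>2 \<le> 1" using \<open>\<bar>g a - \<mu>\<bar> \<le> 1\<close> by (simp add: abs_square_le_1)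
      then show ?thesis by (simp add: power_mult_distrib mult_left_le)
    qed
    have "exp (t * g a) = exp (t * \<mu>) * exp (t * (g a - \<mu>))" by (simp add: exp_add[symmetric] algebra_simps)
    also have "\<dots> \<le> exp (t * \<mu>) * (1 + t * (g a - \<mu>) + t\<^sup>2)"
      using exp_le_quad[OF a1] a2 by (intro mult_left_mono) auto
    finally show ?thesis .
  qed
  have "measure_pmf.expectation p (\<lambda>a. exp (t * g a)) \<le>
        measure_pmf.expectation p (\<lambda>a. exp (t * \<mu>) * (1 + t * (g a - \<mu>) + t\<^sup>2))"
    using pw ie ig by (intro integral_mono) auto
  also have "\<dots> = exp (t * \<mu>) * (1 + t\<^sup>2)"
    using ig by (simp add: algebra_simps \<mu>_def)
  also have "\<dots> \<le> exp (t * \<mu>) * exp (t\<^sup>2)"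
    using exp_ge_add_one_self[of "t\<^sup>2"] by (intro mult_left_mono) auto
  finally have le: "measure_pmf.expectation p (\<lambda>a. exp (t * g a)) \<le> exp (t * \<mu> + t\<^sup>2)"
    by (simp add: exp_add)
  have "(\<integral>\<^sup>+a. ennreal (exp (t * g a)) \<partial>p) = ennreal (measure_pmf.expectation p (\<lambda>a. exp (t * g a)))"
    using ie by (intro nn_integral_eq_integral) auto
  also have "\<dots> \<le> ennreal (exp (t * \<mu> + t\<^sup>2))" using le by (rule ennreal_leI)
  finally show ?thesis by (simp add: \<mu>_def)
qed



lemma chernoff_upper:
  fixes g :: "'a \<Rightarrow> real" and p :: "'a pmf"
  assumes g: "\<And>a. 0 \<le> g a \<and> g a \<le> 1" and l: "0 \<le> l" "l \<le> 2"
  shows "measure_pmf.prob (iid_pmf p m) {L. sum_list (map g L) \<ge> real m * (measure_pmf.expectation p g + l)}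
         \<le> exp (- real m * l\<^sup>2 / 4)"
proof -
  define \<mu> where "\<mu> = measure_pmf.expectation p g"
  define t where "t = l / 2"
  have t: "0 \<le> t" "\<bar>t\<bar> \<le> 1" using l by (auto simp: t_def)
  define A where "A = {L. sum_list (map g L) \<ge> real m * (\<mu> + l)}"
  have ind: "indicator A L \<le> ennreal (exp (- (t * real m * (\<mu> + l))) * exp (t * sum_list (map g L)))" for L
  proof (cases "L \<in> A")
    case True
    then have "t * real m * (\<mu> + l) \<le> t * sum_list (map g L)" using t unfolding A_def
      by (simp add: mult.assoc mult_left_mono)
    then have "1 \<le> exp (- (t * real m * (\<mu> + l))) * exp (t * sum_list (map g L))"
      by (simp add: exp_add[symmetric])
    then show ?thesis using True by (simp add: ennreal_ge_1)
  qed simp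
  have "emeasure (measure_pmf (iid_pmf p m)) A = (\<integral>\<^sup>+L. indicator A L \<partial>iid_pmf p m)" by simp
  also have "\<dots> \<le> (\<integral>\<^sup>+L. ennreal (exp (- (t * real m * (\<mu> + l)))) * ennreal (exp (t * sum_list (map g L))) \<partial>iid_pmf p m)"
    using ind by (intro nn_integral_mono) (simp add: ennreal_mult)
  also have "\<dots> = ennreal (exp (- (t * real m * (\<mu> + l)))) * (\<integral>\<^sup>+a. ennreal (exp (t * g a)) \<partial>p) ^ m"
    by (subst nn_integral_cmult) (auto simp: iid_mgf)
  also have "\<dots> \<le> ennreal (exp (- (t * real m * (\<mu> + l)))) * ennreal (exp (t * \<mu> + t\<^sup>2)) ^ m"
    using mgf_one[OF g t(2), of p] by (intro mult_left_mono power_mono) (auto simp: \<mu>_def)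
  also have "\<dots> = ennreal (exp (- (t * real m * (\<mu> + l))) * exp (t * \<mu> + t\<^sup>2) ^ m)"
    by (simp add: ennreal_mult ennreal_power)
  also have "exp (- (t * real m * (\<mu> + l))) * exp (t * \<mu> + t\<^sup>2) ^ m = exp (- real m * l\<^sup>2 / 4)"
    by (simp add: exp_of_nat_mult[symmetric] exp_add[symmetric] t_def power2_eq_square field_simps)
  finally have "ennreal (measure_pmf.prob (iid_pmf p m) A) \<le> ennreal (exp (- real m * l\<^sup>2 / 4))"
    by (simp add: measure_pmf.emeasure_eq_measure)
  then show ?thesis by (simp add: A_def \<mu>_def)
qed



lemma prob_mono_support:
  assumes "\<And>x. x \<in> set_pmf p \<Longrightarrow> x \<in> A \<Longrightarrow> x \<in> B"
  shows "measure_pmf.prob p A \<le> measure_pmf.prob p B"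
  by (rule measure_pmf.finite_measure_mono_AE) (auto intro!: AE_pmfI assms)

lemma chernoff_lower:
  fixes g :: "'a \<Rightarrow> real" and p :: "'a pmf"
  assumes g: "\<And>a. 0 \<le> g a \<and> g a \<le> 1" and l: "0 \<le> l" "l \<le> 2"
  shows "measure_pmf.prob (iid_pmf p m) {L. sum_list (map g L) \<le> real m * (measure_pmf.expectation p g - l)}
         \<le> exp (- real m * l\<^sup>2 / 4)"
proof -
  define \<mu> where "\<mu> = measure_pmf.expectation p g"
  have ig: "integrable (measure_pmf p) g" using g by (intro pmf_integrable_bounded[where B=1]) auto
  have E1: "measure_pmf.expectation p (\<lambda>a. 1 - g a) = 1 - \<mu>"
    using ig by (simp add: \<mu>_def)
  have sl: "sum_list (map (\<lambda>a. 1 - g a) L) = real (length L) - sum_list (map g L)" for L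
    by (induction L) auto
  have "measure_pmf.prob (iid_pmf p m) {L. sum_list (map g L) \<le> real m * (\<mu> - l)}
     \<le> measure_pmf.prob (iid_pmf p m) {L. sum_list (map (\<lambda>a. 1 - g a) L) \<ge> real m * (measure_pmf.expectation p (\<lambda>a. 1 - g a) + l)}"
    by (rule prob_mono_support) (auto simp: sl E1 algebra_simps dest!: iid_set)
  also have "\<dots> \<le> exp (- real m * l\<^sup>2 / 4)"
    by (rule chernoff_upper) (use g l in auto)
  finally show ?thesis by (simp add: \<mu>_def)
qed

lemma chernoff_two:
  fixes g :: "'a \<Rightarrow> real" and p :: "'a pmf"
  assumes g: "\<And>a. 0 \<le> g a \<and> g a \<le> 1" and l: "0 \<le> l" "l \<le> 2" and m: "m > 0"
  shows "measure_pmf.prob (iid_pmf p m) {L. l < \<bar>sum_list (map g L) / real m - measure_pmf.expectation p g\<bar>}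
         \<le> 2 * exp (- real m * l\<^sup>2 / 4)"
proof -
  define \<mu> where "\<mu> = measure_pmf.expectation p g"
  have "measure_pmf.prob (iid_pmf p m) {L. l < \<bar>sum_list (map g L) / real m - \<mu>\<bar>}
     \<le> measure_pmf.prob (iid_pmf p m) ({L. sum_list (map g L) \<ge> real m * (\<mu> + l)} \<union> {L. sum_list (map g L) \<le> real m * (\<mu> - l)})"
  proof (rule prob_mono_support)
    fix L assume "L \<in> {L. l < \<bar>sum_list (map g L) / real m - \<mu>\<bar>}"
    then have "l < sum_list (map g L) / real m - \<mu> \<or> l < \<mu> - sum_list (map g L) / real m" by auto
    then show "L \<in> {L. sum_list (map g L) \<ge> real m * (\<mu> + l)} \<union> {L. sum_list (map g L) \<le> real m * (\<mu> - l)}"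
      using m by (auto simp: field_simps)
  qed
  also have "\<dots> \<le> measure_pmf.prob (iid_pmf p m) {L. sum_list (map g L) \<ge> real m * (\<mu> + l)}
               + measure_pmf.prob (iid_pmf p m) {L. sum_list (map g L) \<le> real m * (\<mu> - l)}"
    by (rule measure_subadditive) (auto simp: measure_pmf.emeasure_eq_measure)
  also have "\<dots> \<le> exp (- real m * l\<^sup>2 / 4) + exp (- real m * l\<^sup>2 / 4)"
    using chernoff_upper[OF g l] chernoff_lower[OF g l] unfolding \<mu>_def by (intro add_mono) auto
  finally show ?thesis by (simp add: \<mu>_def)
qed



fun depth :: "dt \<Rightarrow> nat" where
  "depth (DLeaf b) = 0"
| "depth (DQuery i a b) = Suc (max (depth a) (depth b))"

fun vars_ok :: "nat \<Rightarrow> dt \<Rightarrow> bool" where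
  "vars_ok n (DLeaf b) = True"
| "vars_ok n (DQuery i a b) = (i < n \<and> vars_ok n a \<and> vars_ok n b)"

fun leaves :: "dt \<Rightarrow> nat" where
  "leaves (DLeaf b) = 1"
| "leaves (DQuery i a b) = leaves a + leaves b"

definition cnt :: "(bool list \<times> bool) multiset \<Rightarrow> dt \<Rightarrow> nat" where
  "cnt X h = size (filter_mset (\<lambda>(x, y). dt_eval h x \<noteq> y) X)"

lemma emp_err_cnt: "emp_err X h = real (cnt X h) / real (size X)"
  by (simp add: emp_err_def cnt_def)

lemma cnt_cong: "(\<And>x. dt_eval a x = dt_eval b x) \<Longrightarrow> cnt X a = cnt X b"
  by (simp add: cnt_def)

lemma cnt_query: "cnt X (DQuery i a b) = cnt (restr X i False) a + cnt (restr X i True) b"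
proof -
  let ?P = "\<lambda>(x, y). dt_eval (DQuery i a b) x \<noteq> y"
  have "filter_mset ?P X = filter_mset (\<lambda>z. fst z ! i) (filter_mset ?P X) + filter_mset (\<lambda>z. \<not> fst z ! i) (filter_mset ?P X)"
    by (rule multiset_partition)
  also have "filter_mset (\<lambda>z. fst z ! i) (filter_mset ?P X) = filter_mset (\<lambda>(x, y). dt_eval b x \<noteq> y) (restr X i True)"
    unfolding restr_def filter_filter_mset by (rule filter_mset_cong) auto
  also have "filter_mset (\<lambda>z. \<not> fst z ! i) (filter_mset ?P X) = filter_mset (\<lambda>(x, y). dt_eval a x \<noteq> y) (restr X i False)"
    unfolding restr_def filter_filter_mset by (rule filter_mset_cong) auto
  finally show ?thesis unfolding cnt_def by simp
qed

lemma cnt_le_size: "cnt X h \<le> size X" by (simp add: cnt_def)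

lemma emp_le_imp_cnt_le: "emp_err X a \<le> emp_err X b \<Longrightarrow> cnt X a \<le> cnt X b"
proof (cases "size X = 0")
  case True then show ?thesis by (simp add: cnt_def)
next
  case False
  assume "emp_err X a \<le> emp_err X b"
  then show ?thesis using False by (simp add: emp_err_cnt divide_right_mono_neg field_simps)
qed

lemma find_props: "T \<in> find_set n X d \<Longrightarrow> depth T \<le> d \<and> vars_ok n T"
proof (induction d arbitrary: X T)
  case 0 then show ?case by auto
next
  case (Suc d)
  then obtain i T0 T1 where "T = DQuery i T0 T1" "i < n" "T0 \<in> find_set n (restr X i False) d" "T1 \<in> find_set n (restr X i True) d"
    by (auto simp: Let_def)
  then show ?case using Suc.IH by fastforce
qed

lemma find_finite_ne: "n \<ge> 1 \<Longrightarrow> finite (find_set n X d) \<and> find_set n X d \<noteq> {}"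
proof (induction d arbitrary: X)
  case 0
  have "finite (find_set n X 0)"
    by (rule finite_subset[of _ "range DLeaf"]) auto
  moreover have "find_set n X 0 \<noteq> {}"
  proof (cases "emp_err X (DLeaf True) \<le> emp_err X (DLeaf False)")
    case True
    have "\<forall>c'. emp_err X (DLeaf True) \<le> emp_err X (DLeaf c')" using True by (intro allI, case_tac c') auto
    then have "DLeaf True \<in> find_set n X 0" by auto
    then show ?thesis by auto
  next
    case False
    have "\<forall>c'. emp_err X (DLeaf False) \<le> emp_err X (DLeaf c')" using False by (intro allI, case_tac c') auto
    then have "DLeaf False \<in> find_set n X 0" by auto
    then show ?thesis by auto
  qed
  ultimately show ?case by simp
next
  case (Suc d)
  define C where "C = {DQuery i T0 T1 | i T0 T1. i < n \<and> T0 \<in> find_set n (restr X i False) d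
                                        \<and> T1 \<in> find_set n (restr X i True) d}"
  have fs: "find_set n X (Suc d) = {T \<in> C. \<forall>T' \<in> C. emp_err X T \<le> emp_err X T'}"
    by (simp add: C_def Let_def)
  have "C \<subseteq> (\<lambda>(i, a, b). DQuery i a b) ` ({..<n} \<times> (\<Union>i<n. find_set n (restr X i False) d) \<times> (\<Union>i<n. find_set n (restr X i True) d))"
  proof
    fix T assume "T \<in> C"
    then obtain i T0 T1 where "T = DQuery i T0 T1" "i<n" "T0 \<in> find_set n (restr X i False) d" "T1 \<in> find_set n (restr X i True) d"
      unfolding C_def by blast
    then show "T \<in> (\<lambda>(i, a, b). DQuery i a b) ` ({..<n} \<times> (\<Union>i<n. find_set n (restr X i False) d) \<times> (\<Union>i<n. find_set n (restr X i True) d))"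
      by (intro image_eqI[where x="(i,T0,T1)"]) auto
  qed
  moreover have "finite ({..<n} \<times> (\<Union>i<n. find_set n (restr X i False) d) \<times> (\<Union>i<n. find_set n (restr X i True) d))"
    using Suc by auto
  ultimately have finC: "finite C" by (meson finite_imageI finite_subset)
  obtain T0 T1 where "T0 \<in> find_set n (restr X 0 False) d" "T1 \<in> find_set n (restr X 0 True) d"
    using Suc by blast
  then have "DQuery 0 T0 T1 \<in> C" using Suc.prems by (auto simp: C_def)
  then have neC: "C \<noteq> {}" by auto
  have "Min (emp_err X ` C) \<in> emp_err X ` C" using finC neC by (intro Min_in) auto
  then obtain T where T: "T \<in> C" "emp_err X T = Min (emp_err X ` C)" by auto
  have "\<forall>T' \<in> C. emp_err X T \<le> emp_err X T'" using T finC by auto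
  then have "T \<in> find_set n X (Suc d)" using T fs by auto
  moreover have "finite (find_set n X (Suc d))" unfolding fs using finC by auto
  ultimately show ?case by blast
qed

lemma find_opt:
  assumes "n \<ge> 1"
  shows "T \<in> find_set n X d \<Longrightarrow> depth h \<le> d \<Longrightarrow> vars_ok n h \<Longrightarrow> cnt X T \<le> cnt X h"
proof (induction d arbitrary: X T h)
  case 0
  then obtain c where "T = DLeaf c" "\<forall>c'. emp_err X (DLeaf c) \<le> emp_err X (DLeaf c')" by auto
  moreover obtain b where "h = DLeaf b" using 0 by (cases h) auto
  ultimately show ?case by (auto intro: emp_le_imp_cnt_le)
next
  case (Suc d)
  define C where "C = {DQuery i T0 T1 | i T0 T1. i < n \<and> T0 \<in> find_set n (restr X i False) d
                                        \<and> T1 \<in> find_set n (restr X i True) d}"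
  have fs: "find_set n X (Suc d) = {T \<in> C. \<forall>T' \<in> C. emp_err X T \<le> emp_err X T'}"
    by (simp add: C_def Let_def)
  have Tm: "\<forall>T'\<in>C. emp_err X T \<le> emp_err X T'" using Suc.prems(1) unfolding fs by blast
  have TC: "\<And>T'. T' \<in> C \<Longrightarrow> cnt X T \<le> cnt X T'" using Tm by (auto intro: emp_le_imp_cnt_le)
  have key: "cnt X T \<le> cnt (restr X i False) a + cnt (restr X i True) b"
    if "i < n" "depth a \<le> d" "depth b \<le> d" "vars_ok n a" "vars_ok n b" for i a b
  proof -
    obtain T0 T1 where T01: "T0 \<in> find_set n (restr X i False) d" "T1 \<in> find_set n (restr X i True) d"
      using find_finite_ne[OF assms] by blast
    then have "DQuery i T0 T1 \<in> C" using that by (auto simp: C_def)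
    then have "cnt X T \<le> cnt X (DQuery i T0 T1)" by (rule TC)
    also have "\<dots> = cnt (restr X i False) T0 + cnt (restr X i True) T1" by (rule cnt_query)
    also have "\<dots> \<le> cnt (restr X i False) a + cnt (restr X i True) b"
      using Suc.IH[OF T01(1) that(2) that(4)] Suc.IH[OF T01(2) that(3) that(5)] by simp
    finally show ?thesis .
  qed
  show ?case
  proof (cases h)
    case (DLeaf b)
    have "cnt X T \<le> cnt (restr X 0 False) (DLeaf b) + cnt (restr X 0 True) (DLeaf b)"
      using assms by (intro key) auto
    also have "\<dots> = cnt X (DQuery 0 (DLeaf b) (DLeaf b))" by (rule cnt_query[symmetric])
    also have "\<dots> = cnt X h" using DLeaf by (intro cnt_cong) auto
    finally show ?thesis .
  next
    case (DQuery i a b)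
    then show ?thesis using Suc.prems key[of i a b] cnt_query[of X i a b] by auto
  qed
qed



fun trunc :: "(nat \<Rightarrow> bool option) \<Rightarrow> nat \<Rightarrow> dt \<Rightarrow> dt" where
  "trunc \<rho> d (DLeaf b) = DLeaf b"
| "trunc \<rho> d (DQuery i a b) = (case \<rho> i of
      Some v \<Rightarrow> (if v then trunc \<rho> d b else trunc \<rho> d a)
    | None \<Rightarrow> (case d of 0 \<Rightarrow> DLeaf False
               | Suc d' \<Rightarrow> DQuery i (trunc (\<rho>(i \<mapsto> False)) d' a) (trunc (\<rho>(i \<mapsto> True)) d' b)))"

lemma trunc_depth: "depth (trunc \<rho> d t) \<le> d"
  by (induction t arbitrary: \<rho> d) (auto split: option.splits nat.splits)

lemma trunc_vars: "vars_ok n t \<Longrightarrow> vars_ok n (trunc \<rho> d t)"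
  by (induction t arbitrary: \<rho> d) (auto split: option.splits nat.splits)

lemma leaves_pos: "leaves t \<ge> 1"
  by (induction t) auto

definition Cr :: "nat \<Rightarrow> (nat \<Rightarrow> bool option) \<Rightarrow> bool list set" where
  "Cr n \<rho> = {x \<in> cube n. \<forall>i v. \<rho> i = Some v \<longrightarrow> x ! i = v}"

lemma finite_cube: "finite (cube n)"
proof -
  have "cube n = {xs. set xs \<subseteq> (UNIV::bool set) \<and> length xs = n}" by (auto simp: cube_def)
  then show ?thesis using finite_lists_length_eq[of "UNIV::bool set" n] by simp
qed

lemma card_cube: "card (cube n) = 2 ^ n"
proof -
  have "cube n = {xs. set xs \<subseteq> (UNIV::bool set) \<and> length xs = n}" by (auto simp: cube_def)
  then show ?thesis using card_lists_length_eq[of "UNIV::bool set" n] by simp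
qed

lemma finite_Cr: "finite (Cr n \<rho>)"
  unfolding Cr_def using finite_cube by auto

lemma Cr_upd_nth: "x \<in> Cr n (\<rho>(i \<mapsto> v)) \<Longrightarrow> x ! i = v"
  unfolding Cr_def by (metis (mono_tags, lifting) mem_Collect_eq fun_upd_same)

lemma Cr_split:
  assumes "i < n" "\<rho> i = None"
  shows "card (Cr n (\<rho>(i \<mapsto> False))) = card (Cr n (\<rho>(i \<mapsto> True)))"
    and "card (Cr n \<rho>) = card (Cr n (\<rho>(i \<mapsto> False))) + card (Cr n (\<rho>(i \<mapsto> True)))"
proof -
  define fl where "fl x = x[i := \<not> x ! i]" for x :: "bool list"
  have ff: "fl (fl x) = x" if "x \<in> cube n" for x using that assms by (simp add: fl_def cube_def)
  have "bij_betw fl (Cr n (\<rho>(i \<mapsto> False))) (Cr n (\<rho>(i \<mapsto> True)))"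
  proof (rule bij_betw_byWitness[where f'=fl])
    show "\<forall>a\<in>Cr n (\<rho>(i \<mapsto> False)). fl (fl a) = a" using ff by (auto simp: Cr_def)
    show "\<forall>a\<in>Cr n (\<rho>(i \<mapsto> True)). fl (fl a) = a" using ff by (auto simp: Cr_def)
    show "fl ` Cr n (\<rho>(i \<mapsto> False)) \<subseteq> Cr n (\<rho>(i \<mapsto> True))"
      using assms by (auto simp: fl_def Cr_def cube_def nth_list_update)
    show "fl ` Cr n (\<rho>(i \<mapsto> True)) \<subseteq> Cr n (\<rho>(i \<mapsto> False))"
      using assms by (auto simp: fl_def Cr_def cube_def nth_list_update)
  qed
  then show "card (Cr n (\<rho>(i \<mapsto> False))) = card (Cr n (\<rho>(i \<mapsto> True)))" by (rule bij_betw_same_card)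
  have "Cr n \<rho> = Cr n (\<rho>(i \<mapsto> False)) \<union> Cr n (\<rho>(i \<mapsto> True))"
    using assms by (auto simp: Cr_def)
  moreover have "Cr n (\<rho>(i \<mapsto> False)) \<inter> Cr n (\<rho>(i \<mapsto> True)) = {}"
    using Cr_upd_nth[of _ n \<rho> i False] Cr_upd_nth[of _ n \<rho> i True] by blast
  ultimately show "card (Cr n \<rho>) = card (Cr n (\<rho>(i \<mapsto> False))) + card (Cr n (\<rho>(i \<mapsto> True)))"
    using finite_Cr by (simp add: card_Un_disjoint)
qed

lemma trunc_err:
  "vars_ok n t \<Longrightarrow> real (card {x \<in> Cr n \<rho>. dt_eval (trunc \<rho> d t) x \<noteq> dt_eval t x})
     \<le> real (leaves t) * real (card (Cr n \<rho>)) / 2 ^ d"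
proof (induction t arbitrary: \<rho> d)
  case (DLeaf b) then show ?case by simp
next
  case (DQuery i a b)
  show ?case
  proof (cases "\<rho> i")
    case (Some v)
    let ?c = "if v then b else a"
    have eq: "{x \<in> Cr n \<rho>. dt_eval (trunc \<rho> d (DQuery i a b)) x \<noteq> dt_eval (DQuery i a b) x}
            = {x \<in> Cr n \<rho>. dt_eval (trunc \<rho> d ?c) x \<noteq> dt_eval ?c x}"
      using Some by (auto simp: Cr_def)
    have "real (card {x \<in> Cr n \<rho>. dt_eval (trunc \<rho> d ?c) x \<noteq> dt_eval ?c x}) \<le> real (leaves ?c) * real (card (Cr n \<rho>)) / 2 ^ d"
      using DQuery by auto
    also have "\<dots> \<le> real (leaves (DQuery i a b)) * real (card (Cr n \<rho>)) / 2 ^ d"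
      by (intro divide_right_mono mult_right_mono) auto
    finally show ?thesis using eq by simp
  next
    case None
    show ?thesis
    proof (cases d)
      case 0
      have "real (card {x \<in> Cr n \<rho>. dt_eval (trunc \<rho> d (DQuery i a b)) x \<noteq> dt_eval (DQuery i a b) x}) \<le> real (card (Cr n \<rho>))"
        using finite_Cr by (intro of_nat_mono card_mono) auto
      also have "\<dots> \<le> real (leaves (DQuery i a b)) * real (card (Cr n \<rho>))"
        using leaves_pos[of a] by (simp add: mult_le_cancel_right1)
      finally show ?thesis using 0 by simp
    next
      case (Suc d')
      have i: "i < n" using DQuery.prems by simp
      let ?A = "{x \<in> Cr n (\<rho>(i \<mapsto> False)). dt_eval (trunc (\<rho>(i \<mapsto> False)) d' a) x \<noteq> dt_eval a x}"
      let ?B = "{x \<in> Cr n (\<rho>(i \<mapsto> True)). dt_eval (trunc (\<rho>(i \<mapsto> True)) d' b) x \<noteq> dt_eval b x}"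
      have sub: "{x \<in> Cr n \<rho>. dt_eval (trunc \<rho> d (DQuery i a b)) x \<noteq> dt_eval (DQuery i a b) x} \<subseteq> ?A \<union> ?B"
        using None Suc by (auto simp: Cr_def)
      have "real (card {x \<in> Cr n \<rho>. dt_eval (trunc \<rho> d (DQuery i a b)) x \<noteq> dt_eval (DQuery i a b) x})
            \<le> real (card (?A \<union> ?B))"
        using sub finite_Cr by (intro of_nat_mono card_mono) auto
      also have "\<dots> \<le> real (card ?A) + real (card ?B)"
        using card_Un_le[of ?A ?B] by linarith
      also have "\<dots> \<le> real (leaves a) * real (card (Cr n (\<rho>(i \<mapsto> False)))) / 2 ^ d'
                    + real (leaves b) * real (card (Cr n (\<rho>(i \<mapsto> True)))) / 2 ^ d'"
        using DQuery.IH DQuery.prems by (intro add_mono) auto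
      also have "\<dots> = real (leaves (DQuery i a b)) * real (card (Cr n \<rho>)) / 2 ^ d"
      proof -
        have h1: "real (card (Cr n (\<rho>(i \<mapsto> False)))) = real (card (Cr n \<rho>)) / 2"
          and h2: "real (card (Cr n (\<rho>(i \<mapsto> True)))) = real (card (Cr n \<rho>)) / 2"
          using Cr_split[of i n \<rho>, OF i None] by simp_all
        show ?thesis unfolding h1 h2 Suc by (simp add: field_simps)
      qed
      finally show ?thesis .
    qed
  qed
qed

lemma trunc_exists:
  assumes "vars_ok n t"
  shows "\<exists>t'. depth t' \<le> d \<and> vars_ok n t' \<and>
     real (card {x \<in> cube n. dt_eval t' x \<noteq> dt_eval t x}) \<le> real (leaves t) * 2 ^ n / 2 ^ d"
proof (intro exI conjI)
  have "Cr n Map.empty = cube n" by (simp add: Cr_def)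
  then show "real (card {x \<in> cube n. dt_eval (trunc Map.empty d t) x \<noteq> dt_eval t x}) \<le> real (leaves t) * 2 ^ n / 2 ^ d"
    using trunc_err[OF assms, of Map.empty d] by (simp add: card_cube)
qed (use trunc_depth trunc_vars assms in auto)



fun graft :: "dt \<Rightarrow> (bool \<Rightarrow> dt) \<Rightarrow> dt" where
  "graft (DLeaf b) f = f b"
| "graft (DQuery i a b) f = DQuery i (graft a f) (graft b f)"

lemma graft_eval: "dt_eval (graft t f) x = dt_eval (f (dt_eval t x)) x"
  by (induction t) auto

lemma graft_vars: "vars_ok n t \<Longrightarrow> (\<And>b. vars_ok n (f b)) \<Longrightarrow> vars_ok n (graft t f)"
  by (induction t) auto

lemma graft_leaves: "(\<And>b. leaves (f b) \<le> M) \<Longrightarrow> leaves (graft t f) \<le> leaves t * M"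
  by (induction t) (auto simp: add_mult_distrib intro: add_mono)

fun majt :: "real \<Rightarrow> nat \<Rightarrow> dt list \<Rightarrow> dt" where
  "majt th c [] = DLeaf (real c \<ge> th)"
| "majt th c (t # ts) = graft t (\<lambda>b. majt th (c + (if b then 1 else 0)) ts)"

lemma majt_eval: "dt_eval (majt th c L) x = (real (c + length (filter (\<lambda>t. dt_eval t x) L)) \<ge> th)"
  by (induction L arbitrary: c) (auto simp: graft_eval)

lemma majt_vars: "(\<forall>t\<in>set L. vars_ok n t) \<Longrightarrow> vars_ok n (majt th c L)"
  by (induction L arbitrary: c) (auto intro!: graft_vars)

lemma majt_leaves: "(\<forall>t\<in>set L. leaves t \<le> s) \<Longrightarrow> leaves (majt th c L) \<le> s ^ length L"
proof (induction L arbitrary: c)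
  case Nil then show ?case by simp
next
  case (Cons t L)
  have "leaves (majt th c (t # L)) \<le> leaves t * s ^ length L"
    using Cons by (simp, intro graft_leaves) auto
  also have "\<dots> \<le> s * s ^ length L" using Cons.prems by (intro mult_right_mono) auto
  finally show ?case by simp
qed

fun dpmf :: "sdt \<Rightarrow> dt pmf" where
  "dpmf (SLeaf b) = return_pmf (DLeaf b)"
| "dpmf (SQuery i a b) = bind_pmf (dpmf a) (\<lambda>ta. map_pmf (\<lambda>tb. DQuery i ta tb) (dpmf b))"
| "dpmf (SCoin p a b) = bind_pmf (bernoulli_pmf p) (\<lambda>c. if c then dpmf a else dpmf b)"

lemma run_det: "sdt_run T x = map_pmf (\<lambda>t. dt_eval t x) (dpmf T)"
proof (induction T)
  case (SLeaf b) then show ?case by simp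
next
  case (SQuery i a b)
  show ?case
  proof (cases "x ! i")
    case True
    have "map_pmf (\<lambda>t. dt_eval t x) (dpmf (SQuery i a b)) = bind_pmf (dpmf a) (\<lambda>ta. map_pmf (\<lambda>t. dt_eval t x) (dpmf b))"
      using True by (simp add: map_bind_pmf map_pmf_comp)
    also have "\<dots> = sdt_run (SQuery i a b) x" using True SQuery by simp
    finally show ?thesis by simp
  next
    case False
    have "map_pmf (\<lambda>t. dt_eval t x) (dpmf (SQuery i a b)) = bind_pmf (dpmf a) (\<lambda>ta. return_pmf (dt_eval ta x))"
      using False by (simp add: map_bind_pmf map_pmf_comp)
    also have "\<dots> = map_pmf (\<lambda>t. dt_eval t x) (dpmf a)" by (simp add: map_pmf_def)
    also have "\<dots> = sdt_run (SQuery i a b) x" using False SQuery by simp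
    finally show ?thesis by simp
  qed
next
  case (SCoin p a b)
  then show ?case by (simp add: map_bind_pmf if_distrib cong: if_cong)
qed

lemma det_support: "t \<in> set_pmf (dpmf T) \<Longrightarrow> sdt_wf n T \<Longrightarrow> leaves t \<le> sdt_size T \<and> vars_ok n t"
  by (induction T arbitrary: t) (fastforce split: if_splits)+



definition errf :: "sdt \<Rightarrow> (bool list \<Rightarrow> bool) \<Rightarrow> bool list \<Rightarrow> real" where
  "errf T f x = measure_pmf.prob (sdt_run T x) {y. y \<noteq> f x}"

lemma mu_01: "0 \<le> sdt_mu T x \<and> sdt_mu T x \<le> 1"
  by (simp add: sdt_mu_def pmf_le_1)

lemma errf_formula: "errf T f x = (if f x then 1 - sdt_mu T x else sdt_mu T x)"
proof (cases "f x")
  case True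
  have "{y. y \<noteq> f x} = {False}" using True by auto
  then show ?thesis using True by (simp add: errf_def measure_pmf_single pmf_False_conv_True sdt_mu_def)
next
  case False
  have "{y. y \<noteq> f x} = {True}" using False by auto
  then show ?thesis using False by (simp add: errf_def measure_pmf_single sdt_mu_def)
qed

lemma errf_01: "0 \<le> errf T f x \<and> errf T f x \<le> 1"
  using mu_01[of T x] by (simp add: errf_formula)

lemma cube_ne: "cube n \<noteq> {}"
proof -
  have "replicate n False \<in> cube n" by (simp add: cube_def)
  then show ?thesis by auto
qed

lemma ex_err_sum:
  "measure_pmf.prob (example_pmf n T) {(x, y). f x \<noteq> y} = (\<Sum>x\<in>cube n. errf T f x) / 2 ^ n"
proof -
  let ?A = "{(x, y). f x \<noteq> y}"
  have "emeasure (measure_pmf (example_pmf n T)) ?A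
     = (\<integral>\<^sup>+x. emeasure (measure_pmf (map_pmf (\<lambda>y. (x, y)) (sdt_run T x))) ?A \<partial>pmf_of_set (cube n))"
    by (simp add: example_pmf_def)
  also have "\<dots> = (\<integral>\<^sup>+x. ennreal (errf T f x) \<partial>pmf_of_set (cube n))"
  proof (intro nn_integral_cong)
    fix x
    have "(\<lambda>y. (x, y)) -` ?A = {y. y \<noteq> f x}" by auto
    then show "emeasure (measure_pmf (map_pmf (\<lambda>y. (x, y)) (sdt_run T x))) ?A = ennreal (errf T f x)"
      by (simp add: errf_def measure_pmf.emeasure_eq_measure)
  qed
  also have "\<dots> = (\<Sum>x\<in>cube n. ennreal (errf T f x)) / card (cube n)"
    using finite_cube cube_ne by (simp add: nn_integral_pmf_of_set)
  also have "\<dots> = ennreal ((\<Sum>x\<in>cube n. errf T f x) / 2 ^ n)"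
    using errf_01 by (simp add: card_cube sum_nonneg divide_ennreal[symmetric] ennreal_power[symmetric])
  finally show ?thesis
    by (simp add: measure_pmf.emeasure_eq_measure errf_01 sum_nonneg)
qed

lemma true_err_sum: "true_err n T h = (\<Sum>x\<in>cube n. errf T (dt_eval h) x) / 2 ^ n"
  unfolding true_err_def by (rule ex_err_sum)

definition fstar :: "sdt \<Rightarrow> bool list \<Rightarrow> bool" where
  "fstar T x = round_half (sdt_mu T x)"

lemma opt_sum: "sdt_opt n T = (\<Sum>x\<in>cube n. errf T (fstar T) x) / 2 ^ n"
  unfolding sdt_opt_def errf_def fstar_def
  using finite_cube cube_ne by (simp add: integral_pmf_of_set card_cube)

lemma excess: "errf T f x - errf T (fstar T) x = (if f x = fstar T x then 0 else \<bar>2 * sdt_mu T x - 1\<bar>)"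
  using mu_01[of T x] by (auto simp: errf_formula fstar_def round_half_def)



lemma len_filter_sum: "real (length (filter P L)) = sum_list (map (\<lambda>y. if P y then 1 else 0) L)"
  by (induction L) auto

lemma expect_ind_bool: "measure_pmf.expectation p (\<lambda>y. if y then 1 else 0 :: real) = pmf p True"
  by (subst integral_measure_pmf[of UNIV]) (auto simp: UNIV_bool)

lemma maj_wrong_prob:
  assumes "k \<ge> 1"
  shows "measure_pmf.prob (iid_pmf (dpmf T) k) {L. dt_eval (majt (real k / 2) 0 L) x \<noteq> fstar T x}
         \<le> exp (- real k * (sdt_mu T x - 1/2)\<^sup>2 / 4)"
proof -
  define g where "g = (\<lambda>y::bool. if y then 1 else 0 :: real)"
  define \<mu> where "\<mu> = sdt_mu T x"
  have g01: "\<And>a. 0 \<le> g a \<and> g a \<le> 1" by (simp add: g_def)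
  have Eg: "measure_pmf.expectation (sdt_run T x) g = \<mu>"
    unfolding g_def \<mu>_def sdt_mu_def by (rule expect_ind_bool)
  define E where "E = {B. (real k / 2 \<le> sum_list (map g B)) \<noteq> fstar T x}"
  have pre: "{L. dt_eval (majt (real k / 2) 0 L) x \<noteq> fstar T x} = map (\<lambda>t. dt_eval t x) -` E"
  proof -
    have "real (length (filter (\<lambda>t. dt_eval t x) L)) = sum_list (map g (map (\<lambda>t. dt_eval t x) L))" for L
      by (simp add: len_filter_sum g_def o_def)
    then have "dt_eval (majt (real k / 2) 0 L) x = (real k / 2 \<le> sum_list (map g (map (\<lambda>t. dt_eval t x) L)))" for L
      by (simp add: majt_eval)
    then show ?thesis unfolding E_def vimage_def by simp
  qed
  have "measure_pmf.prob (iid_pmf (dpmf T) k) {L. dt_eval (majt (real k / 2) 0 L) x \<noteq> fstar T x}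
      = measure_pmf.prob (map_pmf (map (\<lambda>t. dt_eval t x)) (iid_pmf (dpmf T) k)) E"
    by (simp only: pre measure_map_pmf)
  also have "map_pmf (map (\<lambda>t. dt_eval t x)) (iid_pmf (dpmf T) k) = iid_pmf (sdt_run T x) k"
    by (simp add: iid_map run_det)
  also have "measure_pmf.prob (iid_pmf (sdt_run T x) k) E \<le> exp (- real k * (\<mu> - 1/2)\<^sup>2 / 4)"
  proof (cases "\<mu> \<ge> 1/2")
    case True
    have fs: "fstar T x" using True by (simp add: fstar_def round_half_def \<mu>_def)
    have "E = {B. sum_list (map g B) < real k / 2}" unfolding E_def using fs by auto
    also have "\<dots> \<subseteq> {B. sum_list (map g B) \<le> real k * (measure_pmf.expectation (sdt_run T x) g - (\<mu> - 1/2))}"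
      by (auto simp: Eg)
    finally have "measure_pmf.prob (iid_pmf (sdt_run T x) k) E \<le> measure_pmf.prob (iid_pmf (sdt_run T x) k) {B. sum_list (map g B) \<le> real k * (measure_pmf.expectation (sdt_run T x) g - (\<mu> - 1/2))}"
      by (intro measure_pmf.finite_measure_mono) auto
    also have "\<dots> \<le> exp (- real k * (\<mu> - 1/2)\<^sup>2 / 4)"
      using True mu_01[of T x] by (intro chernoff_lower g01) (auto simp: \<mu>_def)
    finally show ?thesis .
  next
    case False
    have fs: "\<not> fstar T x" using False by (simp add: fstar_def round_half_def \<mu>_def)
    have "E = {B. sum_list (map g B) \<ge> real k * (measure_pmf.expectation (sdt_run T x) g + (1/2 - \<mu>))}"
      unfolding E_def Eg using fs by (auto simp: algebra_simps)
    then have "measure_pmf.prob (iid_pmf (sdt_run T x) k) E \<le> exp (- real k * (1/2 - \<mu>)\<^sup>2 / 4)"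
      using False mu_01[of T x] by (simp only:) (intro chernoff_upper g01, auto simp: \<mu>_def)
    also have "(1/2 - \<mu>)\<^sup>2 = (\<mu> - 1/2)\<^sup>2" by (simp add: power2_commute)
    finally show ?thesis .
  qed
  finally show ?thesis by (simp add: \<mu>_def)
qed

lemma u_exp_le: "(u::real) * exp (- u\<^sup>2) \<le> 1"
proof -
  have e: "(u - 1/2)\<^sup>2 = u\<^sup>2 - u + 1/4" by (simp add: power2_eq_square algebra_simps)
  have "0 \<le> (u - 1/2)\<^sup>2" by simp
  then have "u \<le> 1 + u\<^sup>2" unfolding e by linarith
  also have "\<dots> \<le> exp (u\<^sup>2)" by (rule exp_ge_add_one_self)
  finally have "u \<le> exp (u\<^sup>2)" .
  then have "u * exp (- u\<^sup>2) \<le> exp (u\<^sup>2) * exp (- u\<^sup>2)" by (intro mult_right_mono) auto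
  also have "\<dots> = 1" by (simp add: exp_add[symmetric])
  finally show ?thesis .
qed

lemma tail_bound:
  assumes "k > 0" "l \<ge> 0"
  shows "2 * l * exp (- real k * l\<^sup>2 / 4) \<le> 4 / sqrt (real k)"
proof -
  define u where "u = l * sqrt (real k) / 2"
  have sk: "sqrt (real k) > 0" using assms by simp
  have s2: "(sqrt (real k))\<^sup>2 = real k" by simp
  have "u\<^sup>2 = l\<^sup>2 * (sqrt (real k))\<^sup>2 / 4" unfolding u_def by (simp add: power_mult_distrib power_divide)
  then have uu: "real k * l\<^sup>2 / 4 = u\<^sup>2" unfolding s2 by simp
  have ll: "2 * l = 4 * u / sqrt (real k)" unfolding u_def using sk by (simp add: field_simps)
  have "2 * l * exp (- real k * l\<^sup>2 / 4) = 4 / sqrt (real k) * (u * exp (- u\<^sup>2))"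
    unfolding ll by (simp add: uu[symmetric])
  also have "\<dots> \<le> 4 / sqrt (real k) * 1"
    using u_exp_le[of u] sk by (intro mult_left_mono) auto
  finally show ?thesis by simp
qed

lemma maj_excess_expect:
  assumes "k \<ge> 1"
  shows "measure_pmf.expectation (iid_pmf (dpmf T) k)
           (\<lambda>L. errf T (dt_eval (majt (real k / 2) 0 L)) x - errf T (fstar T) x) \<le> 4 / sqrt (real k)"
proof -
  define E where "E = {L. dt_eval (majt (real k / 2) 0 L) x \<noteq> fstar T x}"
  define c where "c = \<bar>2 * sdt_mu T x - 1\<bar>"
  have fe: "(\<lambda>L. errf T (dt_eval (majt (real k / 2) 0 L)) x - errf T (fstar T) x) = (\<lambda>L. c * indicator E L)"
  proof
    fix L show "errf T (dt_eval (majt (real k / 2) 0 L)) x - errf T (fstar T) x = c * indicator E L"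
      unfolding excess c_def E_def by (cases "L \<in> E") (simp_all add: E_def)
  qed
  have "measure_pmf.expectation (iid_pmf (dpmf T) k)
           (\<lambda>L. errf T (dt_eval (majt (real k / 2) 0 L)) x - errf T (fstar T) x)
         = c * measure_pmf.prob (iid_pmf (dpmf T) k) E" unfolding fe by simp
  also have "\<dots> \<le> c * exp (- real k * (sdt_mu T x - 1/2)\<^sup>2 / 4)"
    unfolding E_def using maj_wrong_prob[OF assms] by (intro mult_left_mono) (auto simp: c_def)
  also have "c = 2 * \<bar>sdt_mu T x - 1/2\<bar>" unfolding c_def by (simp add: abs_if)
  also have "(sdt_mu T x - 1/2)\<^sup>2 = \<bar>sdt_mu T x - 1/2\<bar>\<^sup>2" by simp
  also have "2 * \<bar>sdt_mu T x - 1/2\<bar> * exp (- real k * \<bar>sdt_mu T x - 1/2\<bar>\<^sup>2 / 4) \<le> 4 / sqrt (real k)"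
    using assms by (intro tail_bound) auto
  finally show ?thesis .
qed



lemma exists_le_expectation:
  fixes f :: "'a \<Rightarrow> real" and p :: "'a pmf"
  assumes "\<And>a. \<bar>f a\<bar> \<le> B"
  shows "\<exists>a\<in>set_pmf p. f a \<le> measure_pmf.expectation p f"
proof (rule ccontr)
  assume "\<not> ?thesis"
  then have lt: "\<And>a. a \<in> set_pmf p \<Longrightarrow> measure_pmf.expectation p f < f a" by force
  have "measure_pmf.expectation p (\<lambda>a. measure_pmf.expectation p f) < measure_pmf.expectation p f"
    by (rule measure_pmf.integral_less_AE_space) (auto intro!: AE_pmfI lt pmf_integrable_bounded[where B=B] assms)
  then show False by simp
qed

lemma good_tree_exists:
  assumes wf: "sdt_wf n T" and k: "k \<ge> 1"
  shows "\<exists>t. vars_ok n t \<and> leaves t \<le> sdt_size T ^ k \<and> true_err n T t \<le> sdt_opt n T + 4 / sqrt (real k)"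
proof -
  define \<Phi> where "\<Phi> L = (\<Sum>x\<in>cube n. errf T (dt_eval (majt (real k / 2) 0 L)) x - errf T (fstar T) x)" for L
  have bnd: "\<bar>errf T (dt_eval (majt (real k / 2) 0 L)) x - errf T (fstar T) x\<bar> \<le> 1" for L x
    using errf_01[of T "dt_eval (majt (real k / 2) 0 L)" x] errf_01[of T "fstar T" x] by linarith
  have bndP: "\<bar>\<Phi> L\<bar> \<le> real (card (cube n))" for L
  proof -
    have "\<bar>\<Phi> L\<bar> \<le> (\<Sum>x\<in>cube n. \<bar>errf T (dt_eval (majt (real k / 2) 0 L)) x - errf T (fstar T) x\<bar>)"
      unfolding \<Phi>_def by (rule sum_abs)
    also have "\<dots> \<le> (\<Sum>x\<in>cube n. 1)" by (intro sum_mono bnd)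
    finally show ?thesis by simp
  qed
  have "measure_pmf.expectation (iid_pmf (dpmf T) k) \<Phi>
      = (\<Sum>x\<in>cube n. measure_pmf.expectation (iid_pmf (dpmf T) k)
           (\<lambda>L. errf T (dt_eval (majt (real k / 2) 0 L)) x - errf T (fstar T) x))"
    unfolding \<Phi>_def
    by (rule Bochner_Integration.integral_sum[where I="cube n" and M="measure_pmf (iid_pmf (dpmf T) k)" and
          f="\<lambda>x L. errf T (dt_eval (majt (real k / 2) 0 L)) x - errf T (fstar T) x"])
       (rule pmf_integrable_bounded[where B=1], rule bnd)
  also have "\<dots> \<le> (\<Sum>x\<in>cube n. 4 / sqrt (real k))"
    by (intro sum_mono maj_excess_expect k)
  finally have EP: "measure_pmf.expectation (iid_pmf (dpmf T) k) \<Phi> \<le> real (card (cube n)) * (4 / sqrt (real k))"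
    by simp
  obtain L where L: "L \<in> set_pmf (iid_pmf (dpmf T) k)" "\<Phi> L \<le> measure_pmf.expectation (iid_pmf (dpmf T) k) \<Phi>"
    using exists_le_expectation[of \<Phi>, OF bndP, of "iid_pmf (dpmf T) k"] by blast
  have Ls: "length L = k" "set L \<subseteq> set_pmf (dpmf T)" using iid_set[OF L(1)] by auto
  have Lt: "\<forall>t\<in>set L. leaves t \<le> sdt_size T \<and> vars_ok n t" using Ls det_support wf by blast
  define t where "t = majt (real k / 2) 0 L"
  have "vars_ok n t" unfolding t_def using Lt by (intro majt_vars) auto
  moreover have "leaves t \<le> sdt_size T ^ k" unfolding t_def using Lt majt_leaves[of L "sdt_size T"] Ls by auto
  moreover have "true_err n T t \<le> sdt_opt n T + 4 / sqrt (real k)"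
  proof -
    have "true_err n T t = ((\<Sum>x\<in>cube n. errf T (fstar T) x) + \<Phi> L) / 2 ^ n"
      unfolding true_err_sum \<Phi>_def t_def by (simp add: sum_subtractf)
    also have "\<dots> = sdt_opt n T + \<Phi> L / 2 ^ n" by (simp add: opt_sum add_divide_distrib)
    also have "\<Phi> L / 2 ^ n \<le> 4 / sqrt (real k)"
      using L(2) EP by (simp add: card_cube field_simps)
    finally show ?thesis by simp
  qed
  ultimately show ?thesis by blast
qed



fun dtrees :: "nat \<Rightarrow> nat \<Rightarrow> dt set" where
  "dtrees n 0 = range DLeaf"
| "dtrees n (Suc d) = range DLeaf \<union> (\<lambda>(i, a, b). DQuery i a b) ` ({..<n} \<times> dtrees n d \<times> dtrees n d)"

lemma in_trees: "depth h \<le> d \<Longrightarrow> vars_ok n h \<Longrightarrow> h \<in> dtrees n d"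
proof (induction d arbitrary: h)
  case 0 then show ?case by (cases h) auto
next
  case (Suc d)
  show ?case
  proof (cases h)
    case (DLeaf b) then show ?thesis by simp
  next
    case (DQuery i a b)
    then have "a \<in> dtrees n d" "b \<in> dtrees n d" "i < n" using Suc by auto
    then show ?thesis using DQuery by (auto intro!: image_eqI[where x="(i, a, b)"])
  qed
qed

lemma trees_card: "finite (dtrees n d) \<and> card (dtrees n d) \<le> (n + 2) ^ (2 ^ (d + 1) - 1)"
proof (induction d)
  case 0
  have "range DLeaf = {DLeaf True, DLeaf False}" by (auto intro: bool.exhaust)
  then show ?case by simp
next
  case (Suc d)
  define N where "N = card (dtrees n d)"
  have fin: "finite (dtrees n (Suc d))" using Suc by simp
  have r2: "card (range DLeaf) = 2"
  proof -
    have "range DLeaf = {DLeaf True, DLeaf False}" by (auto intro: bool.exhaust)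
    then show ?thesis by simp
  qed
  have "card (dtrees n (Suc d)) \<le> card (range DLeaf) + card ((\<lambda>(i, a, b). DQuery i a b) ` ({..<n} \<times> dtrees n d \<times> dtrees n d))"
    by (simp add: card_Un_le)
  also have "\<dots> \<le> 2 + card ({..<n} \<times> dtrees n d \<times> dtrees n d)"
    using r2 card_image_le[of "{..<n} \<times> dtrees n d \<times> dtrees n d" "\<lambda>(i, a, b). DQuery i a b"] Suc by simp
  also have "\<dots> = 2 + n * (N * N)" by (simp add: card_cartesian_product N_def)
  also have "\<dots> \<le> (n + 2) * (N * N)"
  proof -
    have "N \<ge> 1"
    proof -
      have "DLeaf True \<in> dtrees n d" by (cases d) auto
      then show ?thesis unfolding N_def using Suc by (metis One_nat_def Suc_leI card_gt_0_iff empty_iff)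
    qed
    then have h: "1 \<le> N * N" by simp
    have "(n + 2) * (N * N) = n * (N * N) + 2 * (N * N)" by (simp only: add_mult_distrib)
    then show ?thesis using h by linarith
  qed
  also have "\<dots> \<le> (n + 2) * ((n + 2) ^ (2 ^ (d + 1) - 1) * (n + 2) ^ (2 ^ (d + 1) - 1))"
    using Suc N_def by (intro mult_left_mono mult_mono) auto
  also have "\<dots> = (n + 2) ^ (2 ^ (Suc d + 1) - 1)"
  proof -
    have e: "2 ^ (Suc d + 1) - 1 = Suc ((2 ^ (d + 1) - 1) + (2 ^ (d + 1) - 1))"
    proof -
      have q: "(2::nat) ^ d \<ge> 1" by simp
      have e1: "(2::nat) ^ (Suc d + 1) = 4 * 2 ^ d" and e2: "(2::nat) ^ (d + 1) = 2 * 2 ^ d" by simp_all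
      show ?thesis unfolding e1 e2 using q by arith
    qed
    have g: "(x::nat) * (x ^ E * x ^ E) = x ^ Suc (E + E)" for x E by (simp add: power_add)
    show ?thesis unfolding e by (rule g)
  qed
  finally show ?case using fin by simp
qed

definition gf :: "(bool list \<Rightarrow> bool) \<Rightarrow> bool list \<times> bool \<Rightarrow> real" where
  "gf f z = (if f (fst z) \<noteq> snd z then 1 else 0)"

lemma gf01: "0 \<le> gf f z \<and> gf f z \<le> 1" by (simp add: gf_def)

lemma emp_err_list: "emp_err (mset L) h = sum_list (map (gf (dt_eval h)) L) / real (length L)"
proof -
  have "size (filter_mset (\<lambda>(x, y). dt_eval h x \<noteq> y) (mset L)) = length (filter (\<lambda>(x, y). dt_eval h x \<noteq> y) L)"
    by (simp flip: mset_filter)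
  moreover have "real (length (filter (\<lambda>(x, y). dt_eval h x \<noteq> y) L)) = sum_list (map (gf (dt_eval h)) L)"
    unfolding len_filter_sum gf_def by (induction L) auto
  ultimately show ?thesis by (simp add: emp_err_def)
qed

lemma E_gf: "measure_pmf.expectation (example_pmf n T) (gf f) = (\<Sum>x\<in>cube n. errf T f x) / 2 ^ n"
proof -
  have "gf f = indicator {(x, y). f x \<noteq> y}" by (auto simp: gf_def indicator_def fun_eq_iff)
  then show ?thesis by (simp add: ex_err_sum[symmetric])
qed

lemma true_err_gf: "true_err n T h = measure_pmf.expectation (example_pmf n T) (gf (dt_eval h))"
  by (simp add: E_gf true_err_sum)

lemma errf_cong: "f x = f' x \<Longrightarrow> errf T f x = errf T f' x"
  by (simp add: errf_def)

lemma E_gf_cong: "(\<And>x. x \<in> cube n \<Longrightarrow> f x = f' x) \<Longrightarrow>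
   measure_pmf.expectation (example_pmf n T) (gf f) = measure_pmf.expectation (example_pmf n T) (gf f')"
  unfolding E_gf by (intro arg_cong[where f="\<lambda>a. a / 2 ^ n"] sum.cong refl errf_cong) auto

lemma support_ex: "z \<in> set_pmf (example_pmf n T) \<Longrightarrow> fst z \<in> cube n"
  using finite_cube cube_ne by (auto simp: example_pmf_def)



lemma pow2_ge: "n \<ge> 2 \<Longrightarrow> n + 2 \<le> (2::nat) ^ n"
proof (induction n rule: dec_induct)
  case base then show ?case by simp
next
  case (step n) then show ?case by simp
qed

lemma exp_ge_pow2: "(2::real) ^ n \<le> exp (real n)"
proof -
  have "(2::real) ^ n \<le> exp 1 ^ n"
    using exp_ge_add_one_self[of 1] by (intro power_mono) auto
  also have "\<dots> = exp (real n)" by (simp add: exp_of_nat_mult[symmetric])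
  finally show ?thesis .
qed

lemma cardF_bound:
  assumes n: "n \<ge> 1" and D: "D \<ge> 1"
  defines "F \<equiv> (\<lambda>h. restrict (dt_eval h) (cube n)) ` {h. depth h \<le> D \<and> vars_ok n h}"
  shows "finite F \<and> real (card F) \<le> exp (2 * real n ^ (2 * D) + 2)"
proof -
  let ?H = "{h. depth h \<le> D \<and> vars_ok n h}"
  have Hsub: "?H \<subseteq> dtrees n D" using in_trees by auto
  have finH: "finite ?H" using trees_card[of n D] Hsub finite_subset by auto
  then have finF: "finite F" unfolding F_def by simp
  have c1: "card F \<le> card (dtrees n D)"
  proof -
    have "card F \<le> card ?H" unfolding F_def by (rule card_image_le[OF finH])
    also have "\<dots> \<le> card (dtrees n D)" using Hsub trees_card[of n D] by (intro card_mono) auto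
    finally show ?thesis .
  qed
  have FP: "F \<subseteq> cube n \<rightarrow>\<^sub>E (UNIV :: bool set)" unfolding F_def by auto
  have c2: "card F \<le> 2 ^ (2 ^ n)"
  proof -
    have "card F \<le> card (cube n \<rightarrow>\<^sub>E (UNIV :: bool set))"
      using FP finite_cube by (intro card_mono) (auto intro: finite_PiE)
    also have "\<dots> = 2 ^ (2 ^ n)" using finite_cube by (simp add: card_funcsetE card_cube)
    finally show ?thesis .
  qed
  have "real (card F) \<le> exp (2 * real n ^ (2 * D) + 2)"
  proof (cases "n = 1")
    case True
    have "real (card F) \<le> 4" using c2 True by simp
    also have "(4::real) \<le> exp 2" using exp_ge_pow2[of 2] by simp
    also have "\<dots> \<le> exp (2 * real n ^ (2 * D) + 2)" by simp
    finally show ?thesis .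
  next
    case False
    then have n2: "n \<ge> 2" using n by simp
    have "card F \<le> (n + 2) ^ (2 ^ (D + 1) - 1)" using c1 trees_card[of n D] by linarith
    also have "\<dots> \<le> (n + 2) ^ (2 ^ (D + 1))" by (intro power_increasing) auto
    also have "\<dots> \<le> (2 ^ n) ^ (2 ^ (D + 1))" using pow2_ge[OF n2] by (intro power_mono) auto
    finally have "real (card F) \<le> real ((2 ^ n) ^ (2 ^ (D + 1)))" by linarith
    also have "\<dots> = ((2::real) ^ n) ^ (2 ^ (D + 1))" by simp
    also have "\<dots> \<le> exp (real n) ^ (2 ^ (D + 1))" using exp_ge_pow2 by (intro power_mono) auto
    also have "\<dots> = exp (real n * 2 ^ (D + 1))" by (simp add: exp_of_nat_mult[symmetric] mult.commute)
    also have "real n * 2 ^ (D + 1) \<le> 2 * real n ^ (2 * D)"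
    proof -
      have a: "(2::nat) ^ D \<le> n ^ D" using n2 by (intro power_mono) auto
      have b: "n \<le> n ^ D" using n D by (simp add: self_le_power)
      have "n * 2 ^ (D + 1) = 2 * (n * 2 ^ D)" by simp
      also have "\<dots> \<le> 2 * (n ^ D * n ^ D)" using a b by (intro mult_left_mono mult_mono) auto
      also have "\<dots> = 2 * n ^ (2 * D)" by (simp add: power_add[symmetric] mult_2)
      finally have "n * 2 ^ (D + 1) \<le> 2 * n ^ (2 * D)" .
      then have "real (n * 2 ^ (D + 1)) \<le> real (2 * n ^ (2 * D))" by (rule of_nat_mono)
      then show ?thesis by simp
    qed
    then have "exp (real n * 2 ^ (D + 1)) \<le> exp (2 * real n ^ (2 * D) + 2)" by simp
    finally show ?thesis .
  qed
  then show ?thesis using finF by simp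
qed



lemma unif:
  assumes n: "n \<ge> 1" and D: "D \<ge> 1" and m: "m > 0" and e: "0 \<le> \<epsilon>" "\<epsilon> \<le> 4"
  shows "measure_pmf.prob (iid_pmf (example_pmf n T) m)
           {L. \<exists>h. depth h \<le> D \<and> vars_ok n h \<and> \<epsilon>/2 < \<bar>emp_err (mset L) h - true_err n T h\<bar>}
         \<le> exp (2 * real n ^ (2 * D) + 2) * (2 * exp (- real m * (\<epsilon>/2)\<^sup>2 / 4))"
proof -
  define H where "H = {h. depth h \<le> D \<and> vars_ok n h}"
  define F where "F = (\<lambda>h. restrict (dt_eval h) (cube n)) ` H"
  define M where "M = iid_pmf (example_pmf n T) m"
  define Bad where "Bad f = {L. \<epsilon>/2 < \<bar>sum_list (map (gf f) L) / real m - measure_pmf.expectation (example_pmf n T) (gf f)\<bar>}" for f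
  have cF: "finite F \<and> real (card F) \<le> exp (2 * real n ^ (2 * D) + 2)"
    unfolding F_def H_def by (rule cardF_bound[OF n D])
  have "measure_pmf.prob M {L. \<exists>h. depth h \<le> D \<and> vars_ok n h \<and> \<epsilon>/2 < \<bar>emp_err (mset L) h - true_err n T h\<bar>}
       \<le> measure_pmf.prob M (\<Union>f\<in>F. Bad f)"
  proof (rule prob_mono_support)
    fix L assume L: "L \<in> set_pmf M" and "L \<in> {L. \<exists>h. depth h \<le> D \<and> vars_ok n h \<and> \<epsilon>/2 < \<bar>emp_err (mset L) h - true_err n T h\<bar>}"
    then obtain h where h: "h \<in> H" "\<epsilon>/2 < \<bar>emp_err (mset L) h - true_err n T h\<bar>" by (auto simp: H_def)
    have Ls: "length L = m" "set L \<subseteq> set_pmf (example_pmf n T)" using iid_set L unfolding M_def by auto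
    define f where "f = restrict (dt_eval h) (cube n)"
    have mm: "map (gf (dt_eval h)) L = map (gf f) L"
    proof (rule map_cong[OF refl])
      fix z assume "z \<in> set L"
      then have "fst z \<in> cube n" using Ls support_ex by blast
      then show "gf (dt_eval h) z = gf f z" by (simp add: gf_def f_def)
    qed
    have EE: "measure_pmf.expectation (example_pmf n T) (gf (dt_eval h)) = measure_pmf.expectation (example_pmf n T) (gf f)"
      by (rule E_gf_cong) (simp add: f_def)
    have "L \<in> Bad f" unfolding Bad_def mem_Collect_eq mm[symmetric] EE[symmetric]
      using h(2) Ls by (simp add: emp_err_list true_err_gf)
    moreover have "f \<in> F" using h(1) by (simp add: F_def f_def)
    ultimately show "L \<in> (\<Union>f\<in>F. Bad f)" by blast
  qed
  also have "\<dots> \<le> (\<Sum>f\<in>F. measure_pmf.prob M (Bad f))"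
    using cF by (intro measure_subadditive_finite) (auto simp: measure_pmf.emeasure_eq_measure)
  also have "\<dots> \<le> (\<Sum>f\<in>F. 2 * exp (- real m * (\<epsilon>/2)\<^sup>2 / 4))"
  proof (intro sum_mono)
    fix f show "measure_pmf.prob M (Bad f) \<le> 2 * exp (- real m * (\<epsilon>/2)\<^sup>2 / 4)"
      unfolding M_def Bad_def using e m by (intro chernoff_two gf01) auto
  qed
  also have "\<dots> = real (card F) * (2 * exp (- real m * (\<epsilon>/2)\<^sup>2 / 4))" by simp
  also have "\<dots> \<le> exp (2 * real n ^ (2 * D) + 2) * (2 * exp (- real m * (\<epsilon>/2)\<^sup>2 / 4))"
    using cF by (intro mult_right_mono) auto
  finally show ?thesis by (simp add: M_def)
qed



lemma sdt_size_pos: "sdt_size T \<ge> 1"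
  by (induction T) auto

lemma find_n0: "find_set 0 X (Suc d) = {}"
  by (simp add: Let_def)

lemma sqrt_bound:
  assumes e: "0 < \<epsilon>"
  shows "4 / sqrt (real (nat \<lceil>16 / \<epsilon>\<^sup>2\<rceil>)) \<le> \<epsilon>"
proof -
  have "16 / \<epsilon>\<^sup>2 \<le> real (nat \<lceil>16 / \<epsilon>\<^sup>2\<rceil>)" by (rule real_nat_ceiling_ge)
  then have "sqrt (16 / \<epsilon>\<^sup>2) \<le> sqrt (real (nat \<lceil>16 / \<epsilon>\<^sup>2\<rceil>))" by (rule real_sqrt_le_mono)
  moreover have "sqrt (16 / \<epsilon>\<^sup>2) = 4 / \<epsilon>" using e by (simp add: real_sqrt_divide)
  ultimately have "4 / \<epsilon> \<le> sqrt (real (nat \<lceil>16 / \<epsilon>\<^sup>2\<rceil>))" by simp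
  moreover have "0 < 4 / \<epsilon>" using e by simp
  ultimately show ?thesis using e by (simp add: field_simps)
qed

lemma kk_bound:
  assumes e: "0 < \<epsilon>" "\<epsilon> < 1/2"
  shows "real (nat \<lceil>16 / \<epsilon>\<^sup>2\<rceil>) \<le> 17 / \<epsilon>\<^sup>2" "nat \<lceil>16 / \<epsilon>\<^sup>2\<rceil> \<ge> 1"
proof -
  have e2: "\<epsilon>\<^sup>2 < 1" using e by (simp add: power_less_one_iff abs_less_iff)
  have p: "0 < \<epsilon>\<^sup>2" using e by simp
  have "1 < 1 / \<epsilon>\<^sup>2" using e2 p by (simp add: field_simps)
  have "real (nat \<lceil>16 / \<epsilon>\<^sup>2\<rceil>) \<le> 16 / \<epsilon>\<^sup>2 + 1"
  proof -
    define x where "x = 16 / \<epsilon>\<^sup>2"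
    have x0: "x > 0" using p by (simp add: x_def)
    have c: "of_int \<lceil>x\<rceil> - 1 < x" using ceiling_correct[of x] by simp
    have "\<lceil>x\<rceil> \<ge> 0" using x0 by simp
    then have "real (nat \<lceil>x\<rceil>) = of_int \<lceil>x\<rceil>" by simp
    then show ?thesis using c unfolding x_def by linarith
  qed
  also have "\<dots> \<le> 17 / \<epsilon>\<^sup>2" using \<open>1 < 1 / \<epsilon>\<^sup>2\<close> by (simp add: field_simps)
  finally show "real (nat \<lceil>16 / \<epsilon>\<^sup>2\<rceil>) \<le> 17 / \<epsilon>\<^sup>2" .
  have "0 < 16 / \<epsilon>\<^sup>2" using p by simp
  then show "nat \<lceil>16 / \<epsilon>\<^sup>2\<rceil> \<ge> 1" by linarith
qed

lemma m_bound:
  fixes N L \<epsilon> :: real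
  assumes e: "0 < \<epsilon>" and N: "0 \<le> N" and L: "0 \<le> L"
    and m: "m \<ge> 96 * (1 + N + 1 / \<epsilon> + L) ^ 4"
  shows "m * \<epsilon>\<^sup>2 / 16 \<ge> 2 * N\<^sup>2 + 2 + ln 2 + L"
proof -
  define A where "A = 1 + N + 1 / \<epsilon> + L"
  have A1: "A \<ge> 1" and AN: "A \<ge> N" and AL: "A \<ge> L" and Ae: "A \<ge> 1/\<epsilon>"
    using e N L by (auto simp: A_def)
  have "A * \<epsilon> \<ge> 1" using Ae e by (simp add: field_simps)
  then have Ae2: "A\<^sup>2 * \<epsilon>\<^sup>2 \<ge> 1" by (metis power_mult_distrib one_le_power)
  have "N\<^sup>2 \<le> A\<^sup>2" using AN N by (intro power_mono) auto
  moreover have "L \<le> A\<^sup>2" using AL A1 by (smt (verit) power2_eq_square mult_le_cancel_left1)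
  moreover have "1 \<le> A\<^sup>2" using A1 by simp
  moreover have "ln 2 \<le> (1::real)" using ln_2_less_1 by simp
  ultimately have "2 * N\<^sup>2 + 2 + ln 2 + L \<le> 6 * A\<^sup>2" by linarith
  also have "\<dots> \<le> 6 * A\<^sup>2 * (A\<^sup>2 * \<epsilon>\<^sup>2)"
  proof -
    have "6 * A\<^sup>2 * 1 \<le> 6 * A\<^sup>2 * (A\<^sup>2 * \<epsilon>\<^sup>2)" using Ae2 by (intro mult_left_mono) auto
    then show ?thesis by simp
  qed
  also have "\<dots> = 96 * A ^ 4 * \<epsilon>\<^sup>2 / 16" by (simp add: power2_eq_square power4_eq_xxxx)
  also have "\<dots> \<le> m * \<epsilon>\<^sup>2 / 16"
  proof -
    have "96 * A ^ 4 * \<epsilon>\<^sup>2 \<le> m * \<epsilon>\<^sup>2" using m by (intro mult_right_mono) (auto simp: A_def)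
    then show ?thesis by (intro divide_right_mono) auto
  qed
  finally show ?thesis .
qed



lemma main:
  assumes wf: "sdt_wf n T" and e: "0 < \<epsilon>" "\<epsilon> < 1/2" and d: "0 < \<delta>" "\<delta> < 1"
    and D: "D = nat \<lceil>log 2 (real (sdt_size T) powr (17 / \<epsilon>\<^sup>2) / \<epsilon>)\<rceil>"
    and m: "real m \<ge> 96 * (1 + real n ^ D + 1 / \<epsilon> + ln (1 / \<delta>)) ^ 4"
  shows "measure_pmf.prob (sample_pmf n T m)
           {X. \<forall>Tstar \<in> find_set n X D. true_err n T Tstar \<le> sdt_opt n T + 3 * \<epsilon>} \<ge> 1 - \<delta>"
proof -
  define s where "s = sdt_size T"
  define S where "S = real s powr (17 / \<epsilon>\<^sup>2)"
  have s1: "real s \<ge> 1" using sdt_size_pos[of T] by (simp add: s_def)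
  have S1: "S \<ge> 1" unfolding S_def using s1 by (intro ge_one_powr_ge_zero) auto
  have Se: "S / \<epsilon> > 0" using S1 e by simp
  have DS: "S / \<epsilon> \<le> 2 ^ D"
  proof -
    have "log 2 (S / \<epsilon>) \<le> real D" unfolding D S_def s_def by (rule real_nat_ceiling_ge)
    then have "2 powr log 2 (S / \<epsilon>) \<le> 2 powr real D" by (intro powr_mono) auto
    then show ?thesis using Se by (simp add: powr_realpow)
  qed
  have D1: "D \<ge> 1"
  proof (rule ccontr)
    assume "\<not> D \<ge> 1" then have "D = 0" by simp
    then have "S / \<epsilon> \<le> 1" using DS by simp
    moreover have "S / \<epsilon> > 1" using S1 e by (simp add: field_simps)
    ultimately show False by simp
  qed
  have SD: "S / 2 ^ D \<le> \<epsilon>" using DS e by (simp add: field_simps)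
  define G where "G = {X. \<forall>Tstar \<in> find_set n X D. true_err n T Tstar \<le> sdt_opt n T + 3 * \<epsilon>}"
  have sp: "measure_pmf.prob (sample_pmf n T m) G = measure_pmf.prob (iid_pmf (example_pmf n T) m) (mset -` G)"
    by (simp add: sample_pmf_def)
  show ?thesis
  proof (cases "n = 0")
    case True
    obtain d' where "D = Suc d'" using D1 by (cases D) auto
    then have "G = UNIV" using True by (simp add: G_def find_n0)
    then show ?thesis using d by (simp add: G_def[symmetric])
  next
    case False
    then have n1: "n \<ge> 1" by simp
    define kk where "kk = nat \<lceil>16 / \<epsilon>\<^sup>2\<rceil>"
    have kk1: "kk \<ge> 1" and kkb: "real kk \<le> 17 / \<epsilon>\<^sup>2" using kk_bound[OF e] by (auto simp: kk_def)
    obtain t where t: "vars_ok n t" "leaves t \<le> sdt_size T ^ kk" "true_err n T t \<le> sdt_opt n T + 4 / sqrt (real kk)"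
      using good_tree_exists[OF wf kk1] by blast
    have tt: "true_err n T t \<le> sdt_opt n T + \<epsilon>" using t(3) sqrt_bound[OF e(1)] by (simp add: kk_def)
    have lt: "real (leaves t) \<le> S"
    proof -
      have "real (leaves t) \<le> real s ^ kk" using t(2) unfolding s_def by (metis of_nat_le_iff of_nat_power)
      also have "\<dots> = real s powr real kk" using s1 by (simp add: powr_realpow)
      also have "\<dots> \<le> S" unfolding S_def using kkb s1 by (intro powr_mono) auto
      finally show ?thesis .
    qed
    obtain t' where t': "depth t' \<le> D" "vars_ok n t'"
      "real (card {x \<in> cube n. dt_eval t' x \<noteq> dt_eval t x}) \<le> real (leaves t) * 2 ^ n / 2 ^ D"
      using trunc_exists[OF t(1), of D] by blast
    have tt': "true_err n T t' \<le> sdt_opt n T + 2 * \<epsilon>"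
    proof -
      let ?P = "\<lambda>x. dt_eval t' x \<noteq> dt_eval t x"
      have "(\<Sum>x\<in>cube n. errf T (dt_eval t') x) \<le> (\<Sum>x\<in>cube n. errf T (dt_eval t) x + (if ?P x then 1 else 0))"
      proof (intro sum_mono)
        fix x
        show "errf T (dt_eval t') x \<le> errf T (dt_eval t) x + (if ?P x then 1 else 0)"
        proof (cases "?P x")
          case True then show ?thesis using errf_01[of T "dt_eval t'" x] errf_01[of T "dt_eval t" x] by simp
        next
          case False then show ?thesis using errf_cong[of "dt_eval t'" x "dt_eval t" T] by simp
        qed
      qed
      also have "\<dots> = (\<Sum>x\<in>cube n. errf T (dt_eval t) x) + real (card {x \<in> cube n. ?P x})"
        using finite_cube by (simp add: sum.distrib sum.inter_filter[symmetric])
      finally have "true_err n T t' \<le> true_err n T t + real (card {x \<in> cube n. ?P x}) / 2 ^ n"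
        unfolding true_err_sum by (simp add: add_divide_distrib[symmetric] divide_right_mono)
      also have "real (card {x \<in> cube n. ?P x}) / 2 ^ n \<le> real (leaves t) / 2 ^ D"
        using t'(3) by (simp add: field_simps)
      also have "real (leaves t) / 2 ^ D \<le> S / 2 ^ D" using lt by (simp add: divide_right_mono)
      finally show ?thesis using tt SD by linarith
    qed
    define B where "B = {L. \<exists>h. depth h \<le> D \<and> vars_ok n h \<and> \<epsilon>/2 < \<bar>emp_err (mset L) h - true_err n T h\<bar>}"
    have sub: "UNIV - B \<subseteq> mset -` G"
    proof
      fix L assume L: "L \<in> UNIV - B"
      have "\<forall>Tstar \<in> find_set n (mset L) D. true_err n T Tstar \<le> sdt_opt n T + 3 * \<epsilon>"
      proof
        fix Tstar assume Ts: "Tstar \<in> find_set n (mset L) D"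
        have p: "depth Tstar \<le> D" "vars_ok n Tstar" using find_props[OF Ts] by auto
        have c: "cnt (mset L) Tstar \<le> cnt (mset L) t'" using find_opt[OF n1 Ts t'(1,2)] .
        have em: "emp_err (mset L) Tstar \<le> emp_err (mset L) t'"
          unfolding emp_err_cnt using c by (intro divide_right_mono) auto
        have b1: "\<bar>emp_err (mset L) Tstar - true_err n T Tstar\<bar> \<le> \<epsilon>/2" using L p by (auto simp: B_def)
        have b2: "\<bar>emp_err (mset L) t' - true_err n T t'\<bar> \<le> \<epsilon>/2" using L t' by (auto simp: B_def)
        show "true_err n T Tstar \<le> sdt_opt n T + 3 * \<epsilon>" using em b1 b2 tt' by linarith
      qed
      then show "L \<in> mset -` G" by (simp add: G_def)
    qed
    have pB: "measure_pmf.prob (iid_pmf (example_pmf n T) m) B \<le> \<delta>"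
    proof -
      define N where "N = real n ^ D"
      have N0: "0 \<le> N" by (simp add: N_def)
      have L0: "0 \<le> ln (1 / \<delta>)" using d by simp
      have A1: "1 \<le> (1 + N + 1 / \<epsilon> + ln (1 / \<delta>)) ^ 4" using N0 L0 e by (intro one_le_power) auto
      have m0: "m > 0" using m A1 N_def by (cases m) auto
      have mb: "real m * \<epsilon>\<^sup>2 / 16 \<ge> 2 * N\<^sup>2 + 2 + ln 2 + ln (1 / \<delta>)"
        using m_bound[OF e(1) N0 L0] m by (simp add: N_def)
      have NN: "N\<^sup>2 = real n ^ (2 * D)" by (simp add: N_def power_mult[symmetric] mult.commute)
      have "measure_pmf.prob (iid_pmf (example_pmf n T) m) B
          \<le> exp (2 * real n ^ (2 * D) + 2) * (2 * exp (- real m * (\<epsilon>/2)\<^sup>2 / 4))"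
        unfolding B_def using unif[OF n1 D1 m0, of \<epsilon> T] e by simp
      also have "\<dots> = 2 * exp (2 * N\<^sup>2 + 2 - real m * \<epsilon>\<^sup>2 / 16)"
      proof -
        have q: "- real m * (\<epsilon>/2)\<^sup>2 / 4 = - (real m * \<epsilon>\<^sup>2 / 16)" by (simp add: power_divide)
        have r: "exp (2 * real n ^ (2 * D) + 2 - real m * \<epsilon>\<^sup>2 / 16) = exp (2 * real n ^ (2 * D) + 2) * exp (- (real m * \<epsilon>\<^sup>2 / 16))"
          using exp_add[of "2 * real n ^ (2 * D) + 2" "- (real m * \<epsilon>\<^sup>2 / 16)"] by simp
        show ?thesis unfolding q NN r by simp
      qed
      also have "\<dots> \<le> 2 * exp (- ln 2 - ln (1 / \<delta>))" using mb by simp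
      also have "\<dots> = \<delta>" using d by (simp add: exp_diff exp_minus ln_div)
      finally show ?thesis .
    qed
    have "1 - \<delta> \<le> 1 - measure_pmf.prob (iid_pmf (example_pmf n T) m) B" using pB by simp
    also have "\<dots> = measure_pmf.prob (iid_pmf (example_pmf n T) m) (UNIV - B)"
      using measure_pmf.prob_compl[of B "iid_pmf (example_pmf n T) m"] by simp
    also have "\<dots> \<le> measure_pmf.prob (iid_pmf (example_pmf n T) m) (mset -` G)"
      using sub by (intro measure_pmf.finite_measure_mono) auto
    finally show ?thesis using sp by (simp add: G_def)
  qed
qed

theorem lemma8:
  shows "\<exists>c::real. c > 0 \<and> (\<exists>(C::real) (k::nat).
    \<forall>(n::nat) (T::sdt) (s::nat) (\<epsilon>::real) (\<delta>::real) (m::nat).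
      sdt_wf n T \<longrightarrow> sdt_size T = s \<longrightarrow> 0 < \<epsilon> \<longrightarrow> \<epsilon> < 1/2 \<longrightarrow> 0 < \<delta> \<longrightarrow> \<delta> < 1 \<longrightarrow>
      (let S = real s powr (c / \<epsilon>\<^sup>2); D = nat \<lceil>log 2 (S / \<epsilon>)\<rceil> in
        real m \<ge> C * (1 + real n ^ D + 1 / \<epsilon> + ln (1 / \<delta>)) ^ k \<longrightarrow>
        measure_pmf.prob (sample_pmf n T m)
          {X. \<forall>Tstar \<in> find_set n X D. true_err n T Tstar \<le> sdt_opt n T + 3 * \<epsilon>}
        \<ge> 1 - \<delta>))"
proof -
  have key: "\<forall>(n::nat) (T::sdt) (s::nat) (\<epsilon>::real) (\<delta>::real) (m::nat).
      sdt_wf n T \<longrightarrow> sdt_size T = s \<longrightarrow> 0 < \<epsilon> \<longrightarrow> \<epsilon> < 1/2 \<longrightarrow> 0 < \<delta> \<longrightarrow> \<delta> < 1 \<longrightarrow>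
      (let S = real s powr (17 / \<epsilon>\<^sup>2); D = nat \<lceil>log 2 (S / \<epsilon>)\<rceil> in
        real m \<ge> 96 * (1 + real n ^ D + 1 / \<epsilon> + ln (1 / \<delta>)) ^ (4::nat) \<longrightarrow>
        measure_pmf.prob (sample_pmf n T m)
          {X. \<forall>Tstar \<in> find_set n X D. true_err n T Tstar \<le> sdt_opt n T + 3 * \<epsilon>}
        \<ge> 1 - \<delta>)"
  proof (intro allI impI)
    fix n :: nat and T :: sdt and s :: nat and \<epsilon> \<delta> :: real and m :: nat
    assume h: "sdt_wf n T" "sdt_size T = s" "0 < \<epsilon>" "\<epsilon> < 1/2" "0 < \<delta>" "\<delta> < 1"
    show "let S = real s powr (17 / \<epsilon>\<^sup>2); D = nat \<lceil>log 2 (S / \<epsilon>)\<rceil> in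
        real m \<ge> 96 * (1 + real n ^ D + 1 / \<epsilon> + ln (1 / \<delta>)) ^ (4::nat) \<longrightarrow>
        measure_pmf.prob (sample_pmf n T m)
          {X. \<forall>Tstar \<in> find_set n X D. true_err n T Tstar \<le> sdt_opt n T + 3 * \<epsilon>}
        \<ge> 1 - \<delta>"
      unfolding Let_def using main[OF h(1) h(3) h(4) h(5) h(6) refl] h(2) by blast
  qed
  show ?thesis
    apply (rule exI[of _ "17::real"])
    apply (rule conjI)
     apply simp
    apply (rule exI[of _ "96::real"])
    apply (rule exI[of _ "4::nat"])
    apply (rule key)
    done
qed

end
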